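(* Let $\xi_1,\xi_2$ be real trigonometric polynomials of degree $k$, let $\mathbf{C}=\{\xi(\varphi)=(\xi_1(\varphi),\xi_2(\varphi)):\varphi\in\mathrm{S}^1\}\subset\mathbb{R}^2$ be the corresponding trigonometric curve, and let $H$ be the set of points hyperbolic with respect to $\mathbf{C}$. Put $\theta(x,\varphi)=|x-\xi(\varphi)|^2$. Then for arbitrary $x,y\in H$ with $x\ne y$, all roots in $\mathbb{C}/2\pi\mathbb{Z}$ of the trigonometric polynomial $\varphi\mapsto\theta(x,\varphi)-\theta(y,\varphi)$ (of degree at most $k$) are real.
   Context: A real trigonometric polynomial of degree $k$ is $\sum_{j=0}^k(a_j\cos j\varphi+b_j\sin j\varphi)$ with real coefficients and $(a_k,b_k)\ne(0,0)$, viewed as a holomorphic function on $\mathbb{C}/2\pi\mathbb{Z}$. A point $x\in\mathbb{R}^2$ is hyperbolic with respect to $\mathbf{C}$ if every straight line through $x$ meets $\mathbf{C}$ at $2k$ points counted with multiplicities (i.e. for every line $L=\{z:\langle u,z\rangle=c\}$ through $x$, the trigonometric polynomial $\langle u,\xi(\varphi)\rangle-c$ has $2k$ real roots counted with multiplicity). $|\cdot|$ is the Euclidean norm. *)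

theory Defs
  imports "HOL-Complex_Analysis.Complex_Analysis"
begin

text \<open>A real trigonometric polynomial with coefficients a j, b j (j \<le> k),
  extended holomorphically to complex arguments (so it is a holomorphic
  function on C / 2 pi Z).\<close>
definition trig_poly :: "(nat \<Rightarrow> real) \<Rightarrow> (nat \<Rightarrow> real) \<Rightarrow> nat \<Rightarrow> complex \<Rightarrow> complex" where
  "trig_poly a b k z =
     (\<Sum>j\<le>k. complex_of_real (a j) * cos (of_nat j * z) + complex_of_real (b j) * sin (of_nat j * z))"

definition has_trig_degree :: "(nat \<Rightarrow> real) \<Rightarrow> (nat \<Rightarrow> real) \<Rightarrow> nat \<Rightarrow> bool" where
  "has_trig_degree a b k \<longleftrightarrow> (a k, b k) \<noteq> (0, 0)"

definition real_roots :: "(complex \<Rightarrow> complex) \<Rightarrow> real set" where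
  "real_roots f = {\<phi>. 0 \<le> \<phi> \<and> \<phi> < 2 * pi \<and> f (complex_of_real \<phi>) = 0}"

definition real_root_count :: "(complex \<Rightarrow> complex) \<Rightarrow> nat" where
  "real_root_count f = (\<Sum>\<phi>\<in>real_roots f. nat (zorder f (complex_of_real \<phi>)))"

text \<open>The curve xi = (xi1, xi2), xi1 = trig_poly a1 b1 k, xi2 = trig_poly a2 b2 k.
  x is hyperbolic iff for every line L = {z. u \<bullet> z = u \<bullet> x} (u \<noteq> 0) through x,
  the trigonometric polynomial u \<bullet> xi(phi) - u \<bullet> x has exactly 2k real roots
  counted with multiplicity.\<close>
definition hyperbolic_pt ::
  "(nat \<Rightarrow> real) \<Rightarrow> (nat \<Rightarrow> real) \<Rightarrow> (nat \<Rightarrow> real) \<Rightarrow> (nat \<Rightarrow> real) \<Rightarrow> nat \<Rightarrow> real \<times> real \<Rightarrow> bool" where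
  "hyperbolic_pt a1 b1 a2 b2 k x \<longleftrightarrow>
     (\<forall>u::real \<times> real. u \<noteq> 0 \<longrightarrow>
        (let g = (\<lambda>z. complex_of_real (fst u) * trig_poly a1 b1 k z
                     + complex_of_real (snd u) * trig_poly a2 b2 k z
                     - complex_of_real (u \<bullet> x))
         in finite (real_roots g) \<and> real_root_count g = 2 * k))"

definition theta ::
  "(nat \<Rightarrow> real) \<Rightarrow> (nat \<Rightarrow> real) \<Rightarrow> (nat \<Rightarrow> real) \<Rightarrow> (nat \<Rightarrow> real) \<Rightarrow> nat \<Rightarrow> real \<times> real \<Rightarrow> complex \<Rightarrow> complex" where
  "theta a1 b1 a2 b2 k x z =
     (complex_of_real (fst x) - trig_poly a1 b1 k z)^2 + (complex_of_real (snd x) - trig_poly a2 b2 k z)^2"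


end

theory Submission
  imports Defs "HOL-Computational_Algebra.Polynomial"
begin


definition tpoly :: "(nat \<Rightarrow> real) \<Rightarrow> (nat \<Rightarrow> real) \<Rightarrow> nat \<Rightarrow> complex poly" where
  "tpoly a b k = (\<Sum>j\<le>k. monom ((of_real (a j) - \<i> * of_real (b j)) / 2) (k + j)
                         + monom ((of_real (a j) + \<i> * of_real (b j)) / 2) (k - j))"

lemma term_rep:
  fixes E w :: complex and j k :: nat and A B :: real
  assumes E: "E = exp (\<i> * w)" and jk: "j \<le> k"
  shows "E ^ k * (of_real A * cos (of_nat j * w) + of_real B * sin (of_nat j * w))
     = (of_real A - \<i> * of_real B) / 2 * E ^ (k + j) + (of_real A + \<i> * of_real B) / 2 * E ^ (k - j)"
proof -
  have E0: "E \<noteq> 0" using E by simp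
  have e1: "exp (\<i> * (of_nat j * w)) = E ^ j"
    using E by (metis exp_of_nat_mult mult.left_commute)
  have e2: "exp (- (\<i> * (of_nat j * w))) = inverse (E ^ j)"
    using e1 by (simp add: exp_minus)
  have pd: "E ^ (k - j) = E ^ k / E ^ j" using E0 jk by (simp add: power_diff)
  show ?thesis
    unfolding cos_exp_eq sin_exp_eq e1 e2 pd power_add
    using E0 by (simp add: field_simps)
qed

lemma trig_rep:
  "exp (\<i> * w) ^ k * trig_poly a b k w = poly (tpoly a b k) (exp (\<i> * w))"
  unfolding trig_poly_def tpoly_def poly_sum sum_distrib_left
  by (intro sum.cong refl) (simp add: term_rep poly_monom)



lemma poly_holo: "poly (p::complex poly) holomorphic_on A"
  unfolding holomorphic_on_def
  by (meson field_differentiable_at_within field_differentiable_def poly_DERIV)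

lemma poly_analytic: "poly (p::complex poly) analytic_on A"
  using analytic_on_open[of UNIV "poly p"] poly_holo analytic_on_subset by blast

lemma poly_holo'[holomorphic_intros]: "f holomorphic_on A \<Longrightarrow> (\<lambda>z. poly (p::complex poly) (f z)) holomorphic_on A"
  using holomorphic_on_compose[of f A "poly p"] poly_holo by (simp add: o_def)

lemma poly_analytic'[analytic_intros]: "f analytic_on A \<Longrightarrow> (\<lambda>z. poly (p::complex poly) (f z)) analytic_on A"
  using analytic_on_compose[of f A "poly p"] poly_analytic by (simp add: o_def)

lemma zorder_poly:
  fixes p :: "complex poly"
  assumes "p \<noteq> 0"
  shows "zorder (poly p) w = int (order w p)"
proof -
  obtain q where q: "p = [:- w, 1:] ^ order w p * q" "\<not> [:- w, 1:] dvd q"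
    using order_decomp[OF assms] by blast
  have qw: "poly q w \<noteq> 0" using q(2) by (simp add: poly_eq_0_iff_dvd)
  show ?thesis
  proof (rule zorder_eqI[where S=UNIV and g="poly q"])
    show "poly p x = poly q x * (x - w) powi int (order w p)" for x
      by (subst q(1)) (simp add: power_int_of_nat mult.commute)
  qed (use qw poly_holo in auto)
qed

lemma zorder_exp_shift: "zorder (\<lambda>x. exp (\<i> * x) - exp (\<i> * z)) z = 1"
proof -
  have d: "deriv (\<lambda>x. exp (\<i> * x) - exp (\<i> * z)) z = \<i> * exp (\<i> * z)"
    by (rule DERIV_imp_deriv) (auto intro!: derivative_eq_intros)
  show ?thesis
    by (rule zorder_zero_eqI') (auto intro!: analytic_intros simp: d)
qed

lemma exp_ne_shift: "\<forall>\<^sub>F x in at z. exp (\<i> * x) - exp (\<i> * z) \<noteq> 0"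
proof -
  have "exp (\<i> * (z + pi)) = - exp (\<i> * z)"
    by (simp add: distrib_left exp_add)
  hence ne: "exp (\<i> * (z + pi)) - exp (\<i> * z) \<noteq> 0" by simp
  have "\<forall>\<^sub>F x in at z. exp (\<i> * x) - exp (\<i> * z) \<noteq> 0 \<and> x \<in> UNIV"
    by (rule non_zero_neighbour_alt[where f="\<lambda>x. exp (\<i> * x) - exp (\<i> * z)" and S=UNIV, OF _ _ _ _ _ ne])
       (auto intro!: holomorphic_intros)
  thus ?thesis by simp
qed

lemma trig_holo[holomorphic_intros]: "trig_poly a b k holomorphic_on A"
  unfolding trig_poly_def by (auto intro!: holomorphic_intros)

lemma trig_analytic[analytic_intros]: "trig_poly a b k analytic_on A"
  unfolding trig_poly_def by (auto intro!: analytic_intros)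

lemma trig_ev_ne:
  assumes "trig_poly a b k z0 \<noteq> 0"
  shows "\<forall>\<^sub>F x in at z. trig_poly a b k x \<noteq> 0"
proof -
  have "\<forall>\<^sub>F x in at z. trig_poly a b k x \<noteq> 0 \<and> x \<in> UNIV"
    by (rule non_zero_neighbour_alt[where f="trig_poly a b k" and S=UNIV, OF _ _ _ _ _ assms]) (auto intro!: holomorphic_intros)
  thus ?thesis by simp
qed

lemma tpoly_nz:
  assumes "trig_poly a b k z0 \<noteq> 0"
  shows "tpoly a b k \<noteq> 0"
proof
  assume "tpoly a b k = 0"
  hence "exp (\<i> * z0) ^ k * trig_poly a b k z0 = 0" by (simp add: trig_rep)
  thus False using assms by simp
qed

lemma trig_eq_prod:
  "trig_poly a b k x = exp (- (of_nat k * (\<i> * x))) * poly (tpoly a b k) (exp (\<i> * x))"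
proof -
  have "poly (tpoly a b k) (exp (\<i> * x)) = exp (\<i> * x) ^ k * trig_poly a b k x"
    by (simp add: trig_rep)
  moreover have "exp (- (of_nat k * (\<i> * x))) * exp (\<i> * x) ^ k = 1"
    by (simp add: exp_minus exp_of_nat_mult)
  ultimately show ?thesis by (metis mult.assoc mult_1)
qed

lemma trig_zorder:
  assumes "trig_poly a b k z0 \<noteq> 0"
  shows "zorder (trig_poly a b k) z = int (order (exp (\<i> * z)) (tpoly a b k))"
proof -
  define P where "P = tpoly a b k"
  have P0: "P \<noteq> 0" using tpoly_nz[OF assms] by (simp add: P_def)
  have eqf: "trig_poly a b k = (\<lambda>x. exp (- (of_nat k * (\<i> * x))) * (poly P \<circ> (\<lambda>x. exp (\<i> * x))) x)"
    by (rule ext) (simp add: trig_eq_prod P_def)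
  have "zorder (trig_poly a b k) z
      = zorder (\<lambda>x. exp (- (of_nat k * (\<i> * x)))) z + zorder (poly P \<circ> (\<lambda>x. exp (\<i> * x))) z"
    unfolding eqf
  proof (rule zorder_times_analytic)
    show "\<forall>\<^sub>F x in at z. exp (- (of_nat k * (\<i> * x))) * (poly P \<circ> (\<lambda>x. exp (\<i> * x))) x \<noteq> 0"
      using trig_ev_ne[OF assms, of z] by (simp add: trig_eq_prod P_def)
  qed (auto intro!: analytic_intros)
  also have "zorder (\<lambda>x. exp (- (of_nat k * (\<i> * x)))) z = 0"
    by (rule zorder_eq_0I) (auto intro!: analytic_intros)
  also have "zorder (poly P \<circ> (\<lambda>x. exp (\<i> * x))) z
      = zorder (poly P) (exp (\<i> * z)) * zorder (\<lambda>x. exp (\<i> * x) - exp (\<i> * z)) z"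
  proof (rule zorder_compose')
    show "isolated_singularity_at (poly P) (exp (\<i> * z))"
      by (rule isolated_singularity_at_analytic) (auto intro!: analytic_intros)
    show "not_essential (poly P) (exp (\<i> * z))"
      by (rule not_essential_analytic) (auto intro!: analytic_intros)
    have ne: "poly P (exp (\<i> * z0)) \<noteq> 0"
      using assms by (simp add: trig_eq_prod P_def)
    have "\<forall>\<^sub>F w in at (exp (\<i> * z)). poly P w \<noteq> 0 \<and> w \<in> UNIV"
      by (rule non_zero_neighbour_alt[where f="poly P" and S=UNIV, OF _ _ _ _ _ ne]) (auto intro!: holomorphic_intros)
    thus "\<forall>\<^sub>F w in at (exp (\<i> * z)). poly P w \<noteq> 0" by simp
    show "(\<lambda>x. exp (\<i> * x)) analytic_on {z}" by (auto intro!: analytic_intros)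
    show "\<forall>\<^sub>F w in at z. exp (\<i> * w) \<noteq> exp (\<i> * z)"
      using exp_ne_shift[of z] by simp
  qed
  also have "\<dots> = int (order (exp (\<i> * z)) P)"
    by (simp add: zorder_poly[OF P0] zorder_exp_shift)
  finally show ?thesis by (simp add: P_def)
qed

lemma degree_tpoly: "degree (tpoly a b k) \<le> 2 * k"
  by (rule degree_le) (auto simp: tpoly_def coeff_sum coeff_monom intro!: sum.neutral)

lemma trig_zorder_sum:
  assumes nz: "trig_poly a b k z0 \<noteq> 0" and S: "finite S" and inj: "inj_on (\<lambda>z. exp (\<i> * z)) S"
  shows "(\<Sum>z\<in>S. zorder (trig_poly a b k) z) \<le> 2 * int k"
proof -
  define P where "P = tpoly a b k"
  define E where "E = (\<lambda>z::complex. exp (\<i> * z))"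
  have P0: "P \<noteq> 0" using tpoly_nz[OF nz] by (simp add: P_def)
  have "(\<Sum>z\<in>S. zorder (trig_poly a b k) z) = int (\<Sum>z\<in>S. order (E z) P)"
    by (simp add: trig_zorder[OF nz] P_def E_def)
  also have "(\<Sum>z\<in>S. order (E z) P) = (\<Sum>w\<in>E ` S. order w P)"
    using inj by (simp add: sum.reindex E_def)
  also have "\<dots> = (\<Sum>w\<in>E ` S \<inter> {w. poly P w = 0}. order w P)"
    by (rule sum.mono_neutral_right) (use S P0 in \<open>auto simp: order_root\<close>)
  also have "\<dots> \<le> (\<Sum>w | poly P w = 0. order w P)"
    by (rule sum_mono2) (use P0 poly_roots_finite in auto)
  also have "\<dots> \<le> degree P" by (rule sum_order_le_degree[OF P0])
  also have "\<dots> \<le> 2 * k" using degree_tpoly by (simp add: P_def)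
  finally show ?thesis by linarith
qed



definition rtp :: "(nat \<Rightarrow> real) \<Rightarrow> (nat \<Rightarrow> real) \<Rightarrow> nat \<Rightarrow> real \<Rightarrow> real" where
  "rtp a b k t = (\<Sum>j\<le>k. a j * cos (real j * t) + b j * sin (real j * t))"

definition da :: "(nat \<Rightarrow> real) \<Rightarrow> nat \<Rightarrow> real" where "da b = (\<lambda>j. real j * b j)"
definition db :: "(nat \<Rightarrow> real) \<Rightarrow> nat \<Rightarrow> real" where "db a = (\<lambda>j. - (real j * a j))"

lemma trig_of_real: "trig_poly a b k (of_real t) = of_real (rtp a b k t)"
proof -
  have e: "complex_of_nat j * complex_of_real t = complex_of_real (real j * t)" for j by simp
  show ?thesis
    unfolding trig_poly_def rtp_def by (simp add: cos_of_real[symmetric] sin_of_real[symmetric])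
qed

lemma rtp_deriv: "(rtp a b k has_real_derivative rtp (da b) (db a) k t) (at t)"
proof -
  have "((\<lambda>t. \<Sum>j\<le>k. a j * cos (real j * t) + b j * sin (real j * t)) has_real_derivative
        (\<Sum>j\<le>k. a j * (- sin (real j * t) * real j) + b j * (cos (real j * t) * real j))) (at t)"
    by (intro DERIV_sum) (auto intro!: derivative_eq_intros)
  moreover have "(\<Sum>j\<le>k. a j * (- sin (real j * t) * real j) + b j * (cos (real j * t) * real j))
     = rtp (da b) (db a) k t"
    unfolding rtp_def da_def db_def by (intro sum.cong) (auto simp: algebra_simps)
  ultimately show ?thesis unfolding rtp_def by simp
qed

lemma trig_deriv: "(trig_poly a b k has_field_derivative trig_poly (da b) (db a) k z) (at z)"
proof -
  have "((\<lambda>z. \<Sum>j\<le>k. of_real (a j) * cos (of_nat j * z) + of_real (b j) * sin (of_nat j * z)) has_field_derivative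
        (\<Sum>j\<le>k. of_real (a j) * (- sin (of_nat j * z) * of_nat j) + of_real (b j) * (cos (of_nat j * z) * of_nat j))) (at z)"
    by (intro DERIV_sum) (auto intro!: derivative_eq_intros)
  moreover have "(\<Sum>j\<le>k. of_real (a j) * (- sin (of_nat j * z) * of_nat j) + of_real (b j) * (cos (of_nat j * z) * of_nat j))
     = trig_poly (da b) (db a) k z"
    unfolding trig_poly_def da_def db_def by (intro sum.cong) (auto simp: algebra_simps)
  ultimately show ?thesis unfolding trig_poly_def by simp
qed

lemma deriv_trig: "deriv (trig_poly a b k) = trig_poly (da b) (db a) k"
  using trig_deriv DERIV_imp_deriv by blast

lemma rtp_cont: "continuous_on A (rtp a b k)"
  unfolding rtp_def by (auto intro!: continuous_intros)

lemma trig_periodic: "trig_poly a b k ((z::complex) + complex_of_real (2 * pi * of_int n)) = trig_poly a b k z"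
proof -
  have ee: "\<i> * (complex_of_real (2 * pi * of_int n)) = complex_of_real (2 * real_of_int n * pi) * \<i>" by (simp add: mult_ac)
  have e: "exp (\<i> * (complex_of_real (2 * pi * of_int n))) = 1"
    unfolding ee by (rule exp_integer_2pi) simp
  have ee2: "of_int (- int k * n) * (\<i> * (2 * complex_of_real pi)) = complex_of_real (2 * real_of_int (- int k * n) * pi) * \<i>" by simp
  have e2: "exp (of_int (- int k * n) * (\<i> * (2 * complex_of_real pi))) = 1"
    unfolding ee2 by (rule exp_integer_2pi) simp
  have "exp (\<i> * (z + complex_of_real (2 * pi * of_int n))) = exp (\<i> * z)"
    by (simp only: distrib_left exp_add e mult_1_right)
  moreover have "exp (- (of_nat k * (\<i> * (z + complex_of_real (2 * pi * of_int n))))) = exp (- (of_nat k * (\<i> * z)))"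
  proof -
    have "- (of_nat k * (\<i> * (z + complex_of_real (2 * pi * of_int n)))) = - (of_nat k * (\<i> * z)) + of_int (- int k * n) * (\<i> * (2 * complex_of_real pi))"
      by (simp add: algebra_simps)
    thus ?thesis by (simp only: exp_add e2) simp
  qed
  ultimately show ?thesis by (simp add: trig_eq_prod)
qed

lemma rtp_periodic: "rtp a b k (t + 2 * pi * real_of_int n) = rtp a b k t"
proof -
  have "complex_of_real (t + 2 * pi * real_of_int n) = complex_of_real t + complex_of_real (2 * pi * of_int n)" by simp
  hence "of_real (rtp a b k (t + 2 * pi * real_of_int n)) = (of_real (rtp a b k t) :: complex)"
    using trig_periodic[of a b k "of_real t" n] by (simp only: trig_of_real[symmetric])
  thus ?thesis by (simp only: of_real_eq_iff)
qed

lemma rtp_periodic1: "rtp a b k (t + 2 * pi) = rtp a b k t"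
  using rtp_periodic[of a b k t 1] by simp

lemma zorder_trig_periodic: "zorder (trig_poly a b k) ((z::complex) + complex_of_real (2 * pi * of_int n)) = zorder (trig_poly a b k) z"
proof -
  have "zorder (trig_poly a b k) (z + complex_of_real (2 * pi * of_int n)) = zorder (\<lambda>u. trig_poly a b k (u + (z + complex_of_real (2 * pi * of_int n)))) 0"
    by (rule zorder_shift)
  also have "(\<lambda>u. trig_poly a b k (u + (z + complex_of_real (2 * pi * of_int n)))) = (\<lambda>u. trig_poly a b k (u + z))"
    using trig_periodic[of a b k] by (simp add: add.assoc[symmetric])
  also have "zorder \<dots> 0 = zorder (trig_poly a b k) z"
    by (rule zorder_shift[symmetric])
  finally show ?thesis .
qed

lemma trig_lin:
  "of_real u1 * trig_poly a1 b1 k z + of_real u2 * trig_poly a2 b2 k z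
   = trig_poly (\<lambda>j. u1 * a1 j + u2 * a2 j) (\<lambda>j. u1 * b1 j + u2 * b2 j) k z"
  unfolding trig_poly_def sum_distrib_left sum.distrib[symmetric]
  by (intro sum.cong) (auto simp: algebra_simps)

lemma trig_const:
  "trig_poly a b k z - of_real c = trig_poly (a(0 := a 0 - c)) b k z"
proof -
  have "trig_poly (a(0 := a 0 - c)) b k z = trig_poly a b k z + (\<Sum>j\<le>k. if j = 0 then - of_real c else 0)"
    unfolding trig_poly_def sum.distrib[symmetric] by (intro sum.cong) auto
  thus ?thesis by simp
qed

lemma db_upd: "db (a(0 := v)) = db a"
  unfolding db_def by (rule ext) auto

lemma rtp_const:
  "rtp (a(0 := a 0 - c)) b k t = rtp a b k t - c"
proof -
  have "of_real (rtp (a(0 := a 0 - c)) b k t) = (of_real (rtp a b k t - c) :: complex)"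
    by (simp add: trig_of_real[symmetric] trig_const[symmetric])
  thus ?thesis by (simp only: of_real_eq_iff)
qed



definition smax :: "(real \<Rightarrow> real) \<Rightarrow> real \<Rightarrow> bool" where
  "smax f t \<longleftrightarrow> (\<exists>e>0. \<forall>s. s \<noteq> t \<and> \<bar>s - t\<bar> < e \<longrightarrow> f s < f t)"
definition smin :: "(real \<Rightarrow> real) \<Rightarrow> real \<Rightarrow> bool" where
  "smin f t \<longleftrightarrow> (\<exists>e>0. \<forall>s. s \<noteq> t \<and> \<bar>s - t\<bar> < e \<longrightarrow> f s > f t)"

lemma not_smax_smin: "smax f t \<Longrightarrow> smin f t \<Longrightarrow> False"
proof -
  assume "smax f t" "smin f t"
  then obtain e1 e2 where e: "e1 > 0" "e2 > 0" "\<forall>s. s \<noteq> t \<and> \<bar>s - t\<bar> < e1 \<longrightarrow> f s < f t"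
     "\<forall>s. s \<noteq> t \<and> \<bar>s - t\<bar> < e2 \<longrightarrow> f s > f t"
    unfolding smax_def smin_def by blast
  define s where "s = t + min e1 e2 / 2"
  have "s \<noteq> t" "\<bar>s - t\<bar> < e1" "\<bar>s - t\<bar> < e2" using e(1,2) by (auto simp: s_def)
  thus False using e(3,4) by force
qed

lemma deriv_sign_mono:
  fixes f f' :: "real \<Rightarrow> real"
  assumes ab: "a < b" and d: "\<And>x. (f has_real_derivative f' x) (at x)"
    and c: "\<And>x. isCont f' x" and nz: "\<And>x. a < x \<Longrightarrow> x < b \<Longrightarrow> f' x \<noteq> 0"
  shows "(\<forall>x y. a \<le> x \<and> x < y \<and> y \<le> b \<longrightarrow> f x < f y) \<or> (\<forall>x y. a \<le> x \<and> x < y \<and> y \<le> b \<longrightarrow> f x > f y)"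
proof -
  have sign: "(\<forall>x. a < x \<and> x < b \<longrightarrow> f' x > 0) \<or> (\<forall>x. a < x \<and> x < b \<longrightarrow> f' x < 0)"
  proof (rule ccontr)
    assume "\<not> ?thesis"
    then obtain x1 x2 where x: "a < x1" "x1 < b" "a < x2" "x2 < b" "f' x1 \<le> 0" "f' x2 \<ge> 0"
      by (metis linorder_not_le)
    have "\<exists>z. min x1 x2 \<le> z \<and> z \<le> max x1 x2 \<and> f' z = 0"
    proof (cases "x1 \<le> x2")
      case True
      from IVT[of f' x1 0 x2] True x c show ?thesis by auto
    next
      case False
      from IVT2[of f' x1 0 x2] False x c show ?thesis by auto
    qed
    then obtain z where "min x1 x2 \<le> z" "z \<le> max x1 x2" "f' z = 0" by blast
    moreover have "a < z" "z < b" using calculation x by auto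
    ultimately show False using nz by auto
  qed
  have cf: "continuous_on {x..y} f" for x y
    using d by (meson DERIV_isCont continuous_at_imp_continuous_on)
  from sign show ?thesis
  proof
    assume pos: "\<forall>x. a < x \<and> x < b \<longrightarrow> f' x > 0"
    have "f x < f y" if "a \<le> x" "x < y" "y \<le> b" for x y
      by (rule DERIV_pos_imp_increasing_open[OF \<open>x < y\<close> _ cf]) (use pos d that in force)
    thus ?thesis by blast
  next
    assume neg: "\<forall>x. a < x \<and> x < b \<longrightarrow> f' x < 0"
    have "f x > f y" if "a \<le> x" "x < y" "y \<le> b" for x y
      by (rule DERIV_neg_imp_decreasing_open[OF \<open>x < y\<close> _ cf]) (use neg d that in force)
    thus ?thesis by blast
  qed
qed

definition nxt :: "real set \<Rightarrow> real \<Rightarrow> real" where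
  "nxt R p = (if \<exists>q\<in>R. p < q then Min {q\<in>R. p < q} else Min R + 2 * pi)"

locale gaps =
  fixes R :: "real set"
  assumes fin: "finite R" and sub: "R \<subseteq> {0..<2*pi}" and ne: "R \<noteq> {}"
begin

lemma min_le: "p \<in> R \<Longrightarrow> Min R \<le> p" using fin by simp
lemma min_in: "Min R \<in> R" using fin ne by simp
lemma in_range: "p \<in> R \<Longrightarrow> 0 \<le> p \<and> p < 2 * pi" using sub by auto

lemma G1: "p \<in> R \<Longrightarrow> p < nxt R p"
proof -
  assume p: "p \<in> R"
  show ?thesis
  proof (cases "\<exists>q\<in>R. p < q")
    case True
    have "Min {q\<in>R. p < q} \<in> {q\<in>R. p < q}" using True fin by (intro Min_in) auto
    thus ?thesis using True by (simp add: nxt_def)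
  next
    case False
    thus ?thesis using in_range[OF p] in_range[OF min_in] by (simp add: nxt_def)
  qed
qed

lemma G1': "p \<in> R \<Longrightarrow> nxt R p \<le> Min R + 2 * pi"
proof -
  assume p: "p \<in> R"
  show ?thesis
  proof (cases "\<exists>q\<in>R. p < q")
    case True
    have "Min {q\<in>R. p < q} \<in> {q\<in>R. p < q}" using True fin by (intro Min_in) auto
    hence m: "nxt R p \<in> R" using True by (simp add: nxt_def)
    show ?thesis using in_range[OF m] in_range[OF min_in] by linarith
  next
    case False
    thus ?thesis by (simp add: nxt_def)
  qed
qed

lemma G2: "p \<in> R \<Longrightarrow> nxt R p \<in> R \<or> nxt R p = Min R + 2 * pi"
proof -
  assume p: "p \<in> R"
  show ?thesis
  proof (cases "\<exists>q\<in>R. p < q")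
    case True
    have "Min {q\<in>R. p < q} \<in> {q\<in>R. p < q}" using True fin by (intro Min_in) auto
    thus ?thesis using True by (simp add: nxt_def)
  qed (simp add: nxt_def)
qed

lemma G4: "p \<in> R \<Longrightarrow> q \<in> R \<Longrightarrow> p < q \<Longrightarrow> nxt R p \<le> q"
  unfolding nxt_def using fin by (auto intro!: Min_le)

lemma G3: "p \<in> R \<Longrightarrow> p < t \<Longrightarrow> t < nxt R p \<Longrightarrow> s \<in> R \<Longrightarrow> t \<noteq> s \<and> t \<noteq> s + 2 * pi"
proof -
  assume p: "p \<in> R" and t: "p < t" "t < nxt R p" and s: "s \<in> R"
  have "t \<noteq> s"
  proof
    assume "t = s"
    hence "p < s" using t by simp
    hence "nxt R p \<le> s" using G4 p s by blast
    thus False using t \<open>t = s\<close> by simp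
  qed
  moreover have "t \<noteq> s + 2 * pi"
    using G1'[OF p] min_le[OF s] t by auto
  ultimately show ?thesis ..
qed

lemma G5: "p \<in> R \<Longrightarrow> q \<in> R \<Longrightarrow> p < s \<Longrightarrow> s < nxt R p \<Longrightarrow> q < s \<Longrightarrow> s < nxt R q \<Longrightarrow> p = q"
proof (rule ccontr)
  assume a: "p \<in> R" "q \<in> R" "p < s" "s < nxt R p" "q < s" "s < nxt R q" "p \<noteq> q"
  show False
  proof (cases "p < q")
    case True thus False using G4[of p q] a by auto
  next
    case False hence "q < p" using a by auto
    thus False using G4[of q p] a by auto
  qed
qed

end

lemma exp_inj_window: "inj_on (\<lambda>z. exp (\<i> * z)) (of_real ` {l..<l + 2 * pi})"
proof (rule inj_onI)
  fix x y assume "x \<in> of_real ` {l..<l + 2 * pi}" "y \<in> of_real ` {l..<l + 2 * pi}"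
    and e: "exp (\<i> * x) = exp (\<i> * y)"
  then obtain s t where st: "x = of_real s" "y = of_real t" "l \<le> s" "s < l + 2 * pi" "l \<le> t" "t < l + 2 * pi"
    by auto
  from e obtain n where n: "\<i> * x = \<i> * y + complex_of_real (real_of_int (2 * n) * pi) * \<i>"
    by (auto simp: exp_eq)
  hence "\<i> * (x - y - complex_of_real (real_of_int (2 * n) * pi)) = 0"
    by (simp add: algebra_simps)
  hence "x - y - complex_of_real (real_of_int (2 * n) * pi) = 0" by simp
  hence "s - t = real_of_int (2 * n) * pi"
    using st by (metis eq_iff_diff_eq_0 of_real_diff of_real_eq_iff)
  moreover have "\<bar>s - t\<bar> < 2 * pi" using st by auto
  ultimately have "\<bar>real_of_int n\<bar> * (2 * pi) < 2 * pi"
    by (simp add: abs_mult)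
  hence "\<bar>real_of_int n\<bar> < 1" by simp
  hence "n = 0" by linarith
  thus "x = y" using \<open>s - t = _\<close> st by simp
qed



lemma P3:
  fixes g g' :: "real \<Rightarrow> real" and Z :: "real set"
  assumes d: "\<And>x. (g has_real_derivative g' x) (at x)" and c: "\<And>x. isCont g' x"
    and per': "\<And>x. g' (x + 2 * pi) = g' x"
    and Zf: "finite Z" and Zdef: "Z = {t. 0 \<le> t \<and> t < 2 * pi \<and> g' t = 0}" and Zne: "Z \<noteq> {}"
    and cls: "\<And>t. g' t = 0 \<Longrightarrow> (smax g t \<and> g t \<ge> \<beta>) \<or> (smin g t \<and> g t \<le> \<alpha>)"
    and ag: "\<alpha> < \<gamma>" and gb: "\<gamma> < \<beta>"
  shows "\<exists>Y l. finite Y \<and> card Z \<le> card Y \<and> Y \<subseteq> {l..<l + 2 * pi} \<and> (\<forall>s\<in>Y. g s = \<gamma>)"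
proof -
  interpret gaps Z using Zf Zne Zdef by unfold_locales auto
  have crit_nxt: "g' (nxt Z t) = 0" if "t \<in> Z" for t
    using G2[OF that] min_in per'[of "Min Z"] Zdef by auto
  have nz: "g' s \<noteq> 0" if t: "t \<in> Z" "t < s" "s < nxt Z t" for t s
  proof
    assume s0: "g' s = 0"
    have r: "Min Z \<le> t" "t < 2 * pi" "0 \<le> Min Z" using min_le[OF t(1)] in_range[OF t(1)] in_range[OF min_in] by auto
    have "nxt Z t \<le> Min Z + 2 * pi" using G1'[OF t(1)] .
    show False
    proof (cases "s < 2 * pi")
      case True
      hence "s \<in> Z" using Zdef s0 r t by auto
      thus False using G3[OF t(1) t(2) t(3), of s] by auto
    next
      case False
      have "g' (s - 2 * pi) = 0" using per'[of "s - 2 * pi"] s0 by simp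
      moreover have "s - 2 * pi < 2 * pi" "0 \<le> s - 2 * pi"
        using False \<open>nxt Z t \<le> _\<close> t r in_range[OF min_in] by auto
      ultimately have "s - 2 * pi \<in> Z" using Zdef by auto
      thus False using G3[OF t(1) t(2) t(3), of "s - 2 * pi"] by auto
    qed
  qed
  have gap: "\<exists>s. t < s \<and> s < nxt Z t \<and> g s = \<gamma>" if t: "t \<in> Z" for t
  proof -
    define n where "n = nxt Z t"
    have tn: "t < n" using G1[OF t] by (simp add: n_def)
    have gt0: "g' t = 0" using t Zdef by auto
    have gn0: "g' n = 0" using crit_nxt[OF t] by (simp add: n_def)
    have mono: "(\<forall>x y. t \<le> x \<and> x < y \<and> y \<le> n \<longrightarrow> g x < g y) \<or> (\<forall>x y. t \<le> x \<and> x < y \<and> y \<le> n \<longrightarrow> g x > g y)"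
      by (rule deriv_sign_mono[OF tn d c]) (use nz t n_def in auto)
    have cont: "continuous_on {t..n} g"
      using d by (meson DERIV_isCont continuous_at_imp_continuous_on)
    from mono show ?thesis
    proof
      assume inc: "\<forall>x y. t \<le> x \<and> x < y \<and> y \<le> n \<longrightarrow> g x < g y"
      have "\<not> smax g t"
      proof
        assume "smax g t"
        then obtain e where e: "e > 0" "\<forall>s. s \<noteq> t \<and> \<bar>s - t\<bar> < e \<longrightarrow> g s < g t" unfolding smax_def by blast
        define s where "s = t + min e (n - t) / 2"
        have "s \<noteq> t" "\<bar>s - t\<bar> < e" "t < s" "s \<le> n" using e(1) tn by (auto simp: s_def min_def field_simps)
        thus False using e inc by force
      qed
      hence a1: "g t \<le> \<alpha>" using cls[OF gt0] by auto
      have "\<not> smin g n"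
      proof
        assume "smin g n"
        then obtain e where e: "e > 0" "\<forall>s. s \<noteq> n \<and> \<bar>s - n\<bar> < e \<longrightarrow> g s > g n" unfolding smin_def by blast
        define s where "s = n - min e (n - t) / 2"
        have "s \<noteq> n" "\<bar>s - n\<bar> < e" "t \<le> s" "s < n" using e(1) tn by (auto simp: s_def min_def field_simps)
        thus False using e inc by force
      qed
      hence b1: "g n \<ge> \<beta>" using cls[OF gn0] by auto
      obtain s where s: "t \<le> s" "s \<le> n" "g s = \<gamma>"
        using IVT'[of g t \<gamma> n] a1 b1 ag gb tn cont by force
      have "s \<noteq> t" "s \<noteq> n" using s a1 b1 ag gb by auto
      thus ?thesis using s n_def by force
    next
      assume dec: "\<forall>x y. t \<le> x \<and> x < y \<and> y \<le> n \<longrightarrow> g x > g y"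
      have "\<not> smin g t"
      proof
        assume "smin g t"
        then obtain e where e: "e > 0" "\<forall>s. s \<noteq> t \<and> \<bar>s - t\<bar> < e \<longrightarrow> g s > g t" unfolding smin_def by blast
        define s where "s = t + min e (n - t) / 2"
        have "s \<noteq> t" "\<bar>s - t\<bar> < e" "t < s" "s \<le> n" using e(1) tn by (auto simp: s_def min_def field_simps)
        thus False using e dec by force
      qed
      hence a1: "g t \<ge> \<beta>" using cls[OF gt0] by auto
      have "\<not> smax g n"
      proof
        assume "smax g n"
        then obtain e where e: "e > 0" "\<forall>s. s \<noteq> n \<and> \<bar>s - n\<bar> < e \<longrightarrow> g s < g n" unfolding smax_def by blast
        define s where "s = n - min e (n - t) / 2"
        have "s \<noteq> n" "\<bar>s - n\<bar> < e" "t \<le> s" "s < n" using e(1) tn by (auto simp: s_def min_def field_simps)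
        thus False using e dec by force
      qed
      hence b1: "g n \<le> \<alpha>" using cls[OF gn0] by auto
      have "\<forall>x. t \<le> x \<and> x \<le> n \<longrightarrow> isCont g x" using d DERIV_isCont by blast
      then obtain s where s: "t \<le> s" "s \<le> n" "g s = \<gamma>"
        using IVT2[of g n \<gamma> t] a1 b1 ag gb tn by force
      have "s \<noteq> t" "s \<noteq> n" using s a1 b1 ag gb by auto
      thus ?thesis using s n_def by force
    qed
  qed
  then obtain \<sigma> where \<sigma>: "\<forall>t\<in>Z. t < \<sigma> t \<and> \<sigma> t < nxt Z t \<and> g (\<sigma> t) = \<gamma>" by metis
  have inj: "inj_on \<sigma> Z"
  proof (rule inj_onI)
    fix p q assume "p \<in> Z" "q \<in> Z" "\<sigma> p = \<sigma> q"
    thus "p = q" using G5[of p q "\<sigma> p"] \<sigma> by auto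
  qed
  show ?thesis
  proof (intro exI conjI)
    show "finite (\<sigma> ` Z)" using Zf by simp
    show "card Z \<le> card (\<sigma> ` Z)" using card_image[OF inj] by simp
    show "\<sigma> ` Z \<subseteq> {Min Z..<Min Z + 2 * pi}"
    proof
      fix s assume "s \<in> \<sigma> ` Z"
      then obtain t where t: "t \<in> Z" "s = \<sigma> t" by blast
      thus "s \<in> {Min Z..<Min Z + 2 * pi}" using \<sigma> min_le[OF t(1)] G1'[OF t(1)] by force
    qed
    show "\<forall>s\<in>\<sigma> ` Z. g s = \<gamma>" using \<sigma> by auto
  qed
qed



lemma smax_periodic:
  assumes "\<And>s. g (s + c) = g s"
  shows "smax g (t + c) \<longleftrightarrow> smax g t"
proof
  assume "smax g (t + c)"
  then obtain e where e: "e > 0" "\<forall>s. s \<noteq> t + c \<and> \<bar>s - (t + c)\<bar> < e \<longrightarrow> g s < g (t + c)" unfolding smax_def by blast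
  have "\<forall>s. s \<noteq> t \<and> \<bar>s - t\<bar> < e \<longrightarrow> g s < g t"
  proof (intro allI impI)
    fix s assume "s \<noteq> t \<and> \<bar>s - t\<bar> < e"
    hence "g (s + c) < g (t + c)" using e(2)[rule_format, of "s + c"] by auto
    thus "g s < g t" using assms by simp
  qed
  thus "smax g t" using e(1) unfolding smax_def by blast
next
  assume "smax g t"
  then obtain e where e: "e > 0" "\<forall>s. s \<noteq> t \<and> \<bar>s - t\<bar> < e \<longrightarrow> g s < g t" unfolding smax_def by blast
  have "\<forall>s. s \<noteq> t + c \<and> \<bar>s - (t + c)\<bar> < e \<longrightarrow> g s < g (t + c)"
  proof (intro allI impI)
    fix s assume "s \<noteq> t + c \<and> \<bar>s - (t + c)\<bar> < e"
    hence "g (s - c) < g t" using e(2)[rule_format, of "s - c"] by auto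
    moreover have "g (s - c) = g s" using assms[of "s - c"] by simp
    ultimately show "g s < g (t + c)" using assms by simp
  qed
  thus "smax g (t + c)" using e(1) unfolding smax_def by blast
qed

lemma smin_periodic:
  assumes "\<And>s. g (s + c) = g s"
  shows "smin g (t + c) \<longleftrightarrow> smin g t"
proof -
  have "smin g u \<longleftrightarrow> smax (\<lambda>s. - g s) u" for u unfolding smin_def smax_def by auto
  thus ?thesis using smax_periodic[of "\<lambda>s. - g s" c t] assms by simp
qed

locale pic =
  fixes A B :: "nat \<Rightarrow> real" and k :: nat
  assumes k1: "k \<ge> 1" and fin: "finite (real_roots (trig_poly A B k))"
    and cnt: "real_root_count (trig_poly A B k) = 2 * k"
begin

abbreviation "F \<equiv> trig_poly A B k"
abbreviation "f \<equiv> rtp A B k"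
abbreviation "f' \<equiv> rtp (da B) (db A) k"
abbreviation "D \<equiv> trig_poly (da B) (db A) k"
abbreviation "zD t \<equiv> zorder D (complex_of_real t)"
abbreviation "zF t \<equiv> zorder F (complex_of_real t)"
definition "R = real_roots F"

lemma R_eq: "R = {p. 0 \<le> p \<and> p < 2 * pi \<and> f p = 0}"
  unfolding R_def real_roots_def by (simp add: trig_of_real)

lemma Rfin: "finite R" using fin by (simp add: R_def)

lemma cnt': "(\<Sum>p\<in>R. nat (zF p)) = 2 * k"
  using cnt by (simp add: real_root_count_def R_def)

lemma R_ne: "R \<noteq> {}" using cnt' k1 by auto

lemma R_sub: "R \<subseteq> {0..<2*pi}"
proof
  fix p assume "p \<in> R"
  hence "0 \<le> p \<and> p < 2*pi" unfolding R_eq by blast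
  thus "p \<in> {0..<2*pi}" by simp
qed

lemma f_nz: "\<exists>t0. f t0 \<noteq> 0"
proof (rule ccontr)
  assume "\<not> ?thesis"
  hence sub: "{0..<2*pi} \<subseteq> R" using R_eq by auto
  have inf: "infinite {0..<2*pi}" by (rule infinite_Ico) simp
  show False using finite_subset[OF sub Rfin] inf by simp
qed

lemma F_nz: obtains t0 where "F (of_real t0) \<noteq> 0"
proof -
  obtain t0 where "f t0 \<noteq> 0" using f_nz by blast
  hence "F (of_real t0) \<noteq> 0" by (simp add: trig_of_real)
  thus ?thesis by (rule that)
qed

lemma freqF: "\<exists>\<^sub>F w in at z. F w \<noteq> 0"
proof -
  obtain t0 where "F (of_real t0) \<noteq> 0" using F_nz by blast
  from trig_ev_ne[OF this, of z] show ?thesis by (intro eventually_frequently) auto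
qed

lemma zF_pos_iff: "zF t > 0 \<longleftrightarrow> f t = 0"
  using zorder_pos_iff[of F UNIV "of_real t", OF trig_holo _ _ freqF] by (simp add: trig_of_real)

lemma fR: "p \<in> R \<Longrightarrow> f p = 0" using R_eq by auto

lemma f_deriv: "(f has_real_derivative f' t) (at t)" by (rule rtp_deriv)

lemma f'_nz: "\<exists>t1. f' t1 \<noteq> 0"
proof (rule ccontr)
  assume "\<not> ?thesis"
  hence "\<forall>x. (f has_real_derivative 0) (at x)" using f_deriv by simp
  hence const: "f x = f y" for x y by (rule DERIV_isconst_all)
  obtain t0 where "f t0 \<noteq> 0" using f_nz by blast
  moreover obtain p where "p \<in> R" using R_ne by blast
  ultimately show False using const[of t0 p] fR[of p] by simp
qed

lemma D_nz: obtains t1 where "D (of_real t1) \<noteq> 0"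
proof -
  obtain t0 where "f' t0 \<noteq> 0" using f'_nz by blast
  hence "D (of_real t0) \<noteq> 0" by (simp add: trig_of_real)
  thus ?thesis by (rule that)
qed

lemma freqD: "\<exists>\<^sub>F w in at z. D w \<noteq> 0"
proof -
  obtain t0 where "D (of_real t0) \<noteq> 0" using D_nz by blast
  from trig_ev_ne[OF this, of z] show ?thesis by (intro eventually_frequently) auto
qed

lemma zD_pos_iff: "zD t > 0 \<longleftrightarrow> f' t = 0"
  using zorder_pos_iff[of D UNIV "of_real t", OF trig_holo _ _ freqD] by (simp add: trig_of_real)

lemma zD_R: "p \<in> R \<Longrightarrow> zD p = zF p - 1"
proof -
  assume p: "p \<in> R"
  have "zorder (deriv F) (of_real p) = zF p - 1"
  proof (rule zorder_deriv_minus_1)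
    show "isolated_singularity_at F (of_real p)"
      by (rule isolated_singularity_at_analytic) (auto intro!: analytic_intros)
    show "not_essential F (of_real p)"
      by (rule not_essential_analytic) (auto intro!: analytic_intros)
    show "\<exists>\<^sub>F w in at (of_real p). F w \<noteq> 0" by (rule freqF)
    show "zF p \<noteq> 0" using zF_pos_iff[of p] fR[OF p] by auto
  qed
  thus ?thesis by (simp add: deriv_trig)
qed

lemma sum_le_win:
  assumes X: "finite X" "X \<subseteq> {l..<l + 2 * pi}"
  shows "(\<Sum>t\<in>X. zD t) \<le> 2 * int k"
proof -
  obtain t1 where t1: "D (of_real t1) \<noteq> 0" using D_nz by blast
  have inj: "inj_on (\<lambda>z. exp (\<i> * z)) (of_real ` X)"
    by (rule inj_on_subset[OF exp_inj_window[of l]]) (use X in auto)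
  have "(\<Sum>z\<in>of_real ` X. zorder D z) \<le> 2 * int k"
    by (rule trig_zorder_sum[OF t1]) (use X inj in auto)
  moreover have "(\<Sum>z\<in>of_real ` X. zorder D z) = (\<Sum>t\<in>X. zD t)"
    by (subst sum.reindex) (auto simp: inj_on_def)
  ultimately show ?thesis by simp
qed

lemma crit_fin: "finite {t. 0 \<le> t \<and> t < 2 * pi \<and> f' t = 0}"
proof -
  have "finite {t. 0 \<le> t \<and> t < 2 * pi \<and> f' t = 0} \<and> card {t. 0 \<le> t \<and> t < 2 * pi \<and> f' t = 0} \<le> 2 * k"
  proof (rule finite_if_finite_subsets_card_bdd)
    fix G assume G: "G \<subseteq> {t. 0 \<le> t \<and> t < 2 * pi \<and> f' t = 0}" "finite G"
    have "int (card G) = (\<Sum>t\<in>G. 1)" by simp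
    also have "\<dots> \<le> (\<Sum>t\<in>G. zD t)"
    proof (rule sum_mono)
      fix t assume "t \<in> G"
      hence "f' t = 0" using G(1) by auto
      thus "1 \<le> zD t" using zD_pos_iff[of t] by linarith
    qed
    also have "\<dots> \<le> 2 * int k" by (rule sum_le_win[of G 0]) (use G in auto)
    finally show "card G \<le> 2 * k" by linarith
  qed
  thus ?thesis by blast
qed

end



lemma rtp_isCont: "isCont (rtp a b k) x"
  unfolding rtp_def by (auto intro!: continuous_intros)

sublocale pic \<subseteq> gaps R
  using Rfin R_sub R_ne by unfold_locales

context pic
begin

lemma f_nxt: "p \<in> R \<Longrightarrow> f (nxt R p) = 0"
proof -
  assume p: "p \<in> R"
  from G2[OF p] show ?thesis
  proof
    assume "nxt R p \<in> R" thus ?thesis by (rule fR)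
  next
    assume "nxt R p = Min R + 2 * pi"
    thus ?thesis using rtp_periodic1[of A B k "Min R"] fR[OF min_in] by simp
  qed
qed

lemma rolle_pt: "p \<in> R \<Longrightarrow> \<exists>w. p < w \<and> w < nxt R p \<and> f' w = 0"
proof -
  assume p: "p \<in> R"
  have "\<exists>z>p. z < nxt R p \<and> (f has_real_derivative 0) (at z)"
  proof (rule Rolle)
    show "p < nxt R p" by (rule G1[OF p])
    show "f p = f (nxt R p)" using fR[OF p] f_nxt[OF p] by simp
    show "continuous_on {p..nxt R p} f" by (rule rtp_cont)
    show "f differentiable at x" for x
      using f_deriv[of x] real_differentiable_def by blast
  qed
  then obtain z where z: "p < z" "z < nxt R p" "(f has_real_derivative 0) (at z)" by blast
  have "f' z = 0" using DERIV_unique[OF f_deriv z(3)] .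
  thus ?thesis using z by blast
qed

definition "wp p = (SOME w. p < w \<and> w < nxt R p \<and> f' w = 0)"

lemma wp: "p \<in> R \<Longrightarrow> p < wp p \<and> wp p < nxt R p \<and> f' (wp p) = 0"
  unfolding wp_def by (rule someI_ex) (rule rolle_pt)

definition "W1 = {p\<in>R. zF p \<ge> 2}"
definition "W2 = wp ` R"
definition "W = W1 \<union> W2"

lemma W1_sub: "W1 \<subseteq> R" unfolding W1_def by blast

lemma W_fin: "finite W" "finite W1" "finite W2"
  unfolding W_def W2_def using finite_subset[OF W1_sub Rfin] Rfin by auto

lemma zF_ge1: "p \<in> R \<Longrightarrow> zF p \<ge> 1"
  using zF_pos_iff[of p] fR[of p] by linarith

lemma W_win: "W \<subseteq> {Min R..<Min R + 2 * pi}"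
proof
  fix t assume "t \<in> W"
  hence "t \<in> W1 \<or> t \<in> W2" unfolding W_def by blast
  thus "t \<in> {Min R..<Min R + 2 * pi}"
  proof
    assume "t \<in> W1"
    hence t: "t \<in> R" using W1_sub by blast
    show ?thesis using min_le[OF t] in_range[OF t] in_range[OF min_in] by simp
  next
    assume "t \<in> W2"
    then obtain p where p: "p \<in> R" "t = wp p" unfolding W2_def by blast
    show ?thesis using wp[OF p(1)] p(2) min_le[OF p(1)] G1'[OF p(1)] by simp
  qed
qed

lemma W_crit: "t \<in> W \<Longrightarrow> f' t = 0"
proof -
  assume "t \<in> W"
  hence "t \<in> W1 \<or> t \<in> W2" unfolding W_def by blast
  thus ?thesis
  proof
    assume "t \<in> W1"
    hence t: "t \<in> R" "zF t \<ge> 2" unfolding W1_def by auto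
    have "zD t > 0" using zD_R[OF t(1)] t(2) by simp
    thus ?thesis using zD_pos_iff by blast
  next
    assume "t \<in> W2"
    then obtain p where p: "p \<in> R" "t = wp p" unfolding W2_def by blast
    show ?thesis using wp[OF p(1)] p(2) by simp
  qed
qed

lemma W_disj: "W1 \<inter> W2 = {}"
proof (rule ccontr)
  assume "W1 \<inter> W2 \<noteq> {}"
  then obtain t where t: "t \<in> W1" "t \<in> W2" by blast
  then obtain p where p: "p \<in> R" "t = wp p" unfolding W2_def by blast
  have "t \<in> R" using t(1) W1_sub by blast
  thus False using G3[of p t t] wp[OF p(1)] p by simp
qed

lemma inj_wp: "inj_on wp R"
proof (rule inj_onI)
  fix p q assume pq: "p \<in> R" "q \<in> R" "wp p = wp q"
  show "p = q" using G5[OF pq(1,2), of "wp p"] wp[OF pq(1)] wp[OF pq(2)] pq(3) by simp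
qed

lemma sum_zF: "(\<Sum>p\<in>R. zF p) = 2 * int k"
proof -
  have "(\<Sum>p\<in>R. zF p) = (\<Sum>p\<in>R. int (nat (zF p)))"
  proof (rule sum.cong)
    fix p assume "p \<in> R"
    hence "zF p \<ge> 1" by (rule zF_ge1)
    thus "zF p = int (nat (zF p))" by simp
  qed simp
  also have "\<dots> = int (\<Sum>p\<in>R. nat (zF p))" by simp
  also have "\<dots> = 2 * int k" using cnt' by simp
  finally show ?thesis .
qed

lemma sumW1: "(\<Sum>t\<in>W1. zD t) = 2 * int k - int (card R)"
proof -
  have "(\<Sum>t\<in>W1. zD t) = (\<Sum>t\<in>W1. zF t - 1)"
    by (rule sum.cong) (use W1_sub zD_R in auto)
  also have "\<dots> = (\<Sum>t\<in>R. zF t - 1)"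
  proof (rule sum.mono_neutral_left[OF Rfin W1_sub])
    show "\<forall>i\<in>R - W1. zF i - 1 = 0"
    proof
      fix i assume "i \<in> R - W1"
      hence "i \<in> R" "\<not> zF i \<ge> 2" unfolding W1_def by auto
      thus "zF i - 1 = 0" using zF_ge1[of i] by linarith
    qed
  qed
  also have "\<dots> = (\<Sum>t\<in>R. zF t) - int (card R)"
    by (simp add: sum_subtractf)
  finally show ?thesis using sum_zF by simp
qed

lemma sumW2: "(\<Sum>t\<in>W2. zD t) = (\<Sum>p\<in>R. zD (wp p))"
  unfolding W2_def by (rule sum.reindex[OF inj_wp, unfolded comp_def])

lemma sumW: "(\<Sum>t\<in>W. zD t) = (\<Sum>t\<in>W1. zD t) + (\<Sum>t\<in>W2. zD t)"
  unfolding W_def by (rule sum.union_disjoint) (use W_fin W_disj in auto)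

lemma zD_wp_ge1: "p \<in> R \<Longrightarrow> zD (wp p) \<ge> 1"
  using wp[of p] zD_pos_iff[of "wp p"] by linarith

lemma sumW_le: "(\<Sum>t\<in>W. zD t) \<le> 2 * int k"
  by (rule sum_le_win[OF W_fin(1) W_win])

lemma V: "p \<in> R \<Longrightarrow> zD (wp p) = 1"
proof -
  assume p: "p \<in> R"
  have le: "(\<Sum>q\<in>R. zD (wp q)) \<le> int (card R)"
    using sumW_le sumW sumW1 sumW2 by linarith
  have "(\<Sum>q\<in>R. zD (wp q) - 1) = (\<Sum>q\<in>R. zD (wp q)) - int (card R)"
    by (simp add: sum_subtractf)
  moreover have "(\<Sum>q\<in>R. zD (wp q) - 1) \<ge> 0"
    by (rule sum_nonneg) (use zD_wp_ge1 in force)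
  ultimately have "(\<Sum>q\<in>R. zD (wp q) - 1) = 0" using le by linarith
  hence "\<forall>q\<in>R. zD (wp q) - 1 = 0"
    by (subst (asm) sum_nonneg_eq_0_iff[OF Rfin]) (use zD_wp_ge1 in force)+
  thus ?thesis using p by simp
qed

lemma sumW_ge: "(\<Sum>t\<in>W. zD t) \<ge> 2 * int k"
proof -
  have "(\<Sum>q\<in>R. zD (wp q)) \<ge> (\<Sum>q\<in>R. 1)"
    by (rule sum_mono) (use zD_wp_ge1 in force)
  thus ?thesis using sumW sumW1 sumW2 by simp
qed

lemma U: "Min R \<le> t \<Longrightarrow> t < Min R + 2 * pi \<Longrightarrow> f' t = 0 \<Longrightarrow> t \<in> W"
proof (rule ccontr)
  assume t: "Min R \<le> t" "t < Min R + 2 * pi" "f' t = 0" "t \<notin> W"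
  have "(\<Sum>s\<in>insert t W. zD s) \<le> 2 * int k"
    by (rule sum_le_win[of _ "Min R"]) (use W_fin W_win t in auto)
  moreover have "(\<Sum>s\<in>insert t W. zD s) = zD t + (\<Sum>s\<in>W. zD s)"
    using W_fin t(4) by simp
  moreover have "zD t \<ge> 1" using zD_pos_iff[of t] t(3) by linarith
  ultimately show False using sumW_ge by linarith
qed

end



context pic
begin

lemma C1w:
  assumes t: "Min R \<le> t" "t < Min R + 2 * pi" and c: "f' t = 0" and nz: "f t \<noteq> 0"
  shows "zD t = 1 \<and> ((smax f t \<and> f t > 0) \<or> (smin f t \<and> f t < 0))"
proof -
  have tW: "t \<in> W" by (rule U[OF t c])
  have "t \<notin> W1" using W1_sub fR nz by blast
  hence "t \<in> W2" using tW unfolding W_def by blast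
  then obtain p where p: "p \<in> R" "t = wp p" unfolding W2_def by blast
  define n where "n = nxt R p"
  have pt: "p < t" "t < n" using wp[OF p(1)] p(2) n_def by auto
  have zt: "zD t = 1" using V[OF p(1)] p(2) by simp
  have fp: "f p = 0" by (rule fR[OF p(1)])
  have fn: "f n = 0" unfolding n_def by (rule f_nxt[OF p(1)])
  have noncrit: "f' s \<noteq> 0" if s: "p < s" "s < n" "s \<noteq> t" for s
  proof
    assume s0: "f' s = 0"
    have "Min R \<le> s" "s < Min R + 2 * pi"
      using min_le[OF p(1)] G1'[OF p(1)] s n_def by auto
    hence "s \<in> W" using U s0 by blast
    hence "s \<in> W1 \<or> s \<in> W2" unfolding W_def by blast
    thus False
    proof
      assume "s \<in> W1"
      hence "s \<in> R" using W1_sub by blast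
      thus False using G3[OF p(1), of s s] s n_def by simp
    next
      assume "s \<in> W2"
      then obtain q where q: "q \<in> R" "s = wp q" unfolding W2_def by blast
      have "p = q" using G5[OF p(1) q(1), of s] s wp[OF q(1)] q(2) n_def by simp
      thus False using s(3) p(2) q(2) by simp
    qed
  qed
  have m1: "(\<forall>x y. p \<le> x \<and> x < y \<and> y \<le> t \<longrightarrow> f x < f y) \<or> (\<forall>x y. p \<le> x \<and> x < y \<and> y \<le> t \<longrightarrow> f x > f y)"
    by (rule deriv_sign_mono[OF pt(1) f_deriv rtp_isCont]) (use noncrit pt in auto)
  have m2: "(\<forall>x y. t \<le> x \<and> x < y \<and> y \<le> n \<longrightarrow> f x < f y) \<or> (\<forall>x y. t \<le> x \<and> x < y \<and> y \<le> n \<longrightarrow> f x > f y)"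
    by (rule deriv_sign_mono[OF pt(2) f_deriv rtp_isCont]) (use noncrit pt in auto)
  define e where "e = min (t - p) (n - t)"
  have e: "e > 0" "e \<le> t - p" "e \<le> n - t" using pt by (auto simp: e_def)
  show ?thesis
  proof (cases "f t > 0")
    case True
    have inc: "\<forall>x y. p \<le> x \<and> x < y \<and> y \<le> t \<longrightarrow> f x < f y"
      using m1 pt fp True by force
    have dec: "\<forall>x y. t \<le> x \<and> x < y \<and> y \<le> n \<longrightarrow> f x > f y"
      using m2 pt fn True by force
    have "\<forall>s. s \<noteq> t \<and> \<bar>s - t\<bar> < e \<longrightarrow> f s < f t"
    proof (intro allI impI)
      fix s assume s: "s \<noteq> t \<and> \<bar>s - t\<bar> < e"
      show "f s < f t"
      proof (cases "s < t")
        case True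
        hence "p \<le> s" using s e by (auto simp: abs_if)
        thus ?thesis using inc True by blast
      next
        case False
        hence "t < s" "s \<le> n" using s e by (auto simp: abs_if)
        thus ?thesis using dec by blast
      qed
    qed
    hence "smax f t" unfolding smax_def using e(1) by blast
    thus ?thesis using zt True by blast
  next
    case False
    hence neg: "f t < 0" using nz by linarith
    have dec: "\<forall>x y. p \<le> x \<and> x < y \<and> y \<le> t \<longrightarrow> f x > f y"
      using m1 pt fp neg by force
    have inc: "\<forall>x y. t \<le> x \<and> x < y \<and> y \<le> n \<longrightarrow> f x < f y"
      using m2 pt fn neg by force
    have "\<forall>s. s \<noteq> t \<and> \<bar>s - t\<bar> < e \<longrightarrow> f s > f t"
    proof (intro allI impI)
      fix s assume s: "s \<noteq> t \<and> \<bar>s - t\<bar> < e"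
      show "f s > f t"
      proof (cases "s < t")
        case True
        hence "p \<le> s" using s e by (auto simp: abs_if)
        thus ?thesis using dec True by blast
      next
        case False
        hence "t < s" "s \<le> n" using s e by (auto simp: abs_if)
        thus ?thesis using inc by blast
      qed
    qed
    hence "smin f t" unfolding smin_def using e(1) by blast
    thus ?thesis using zt neg by blast
  qed
qed

lemma C1:
  assumes c: "f' t = 0" and nz: "f t \<noteq> 0"
  shows "zD t = 1 \<and> ((smax f t \<and> f t > 0) \<or> (smin f t \<and> f t < 0))"
proof -
  define l where "l = Min R"
  define m where "m = \<lfloor>(t - l) / (2 * pi)\<rfloor>"
  define c where "c = 2 * pi * real_of_int (- m)"
  define t' where "t' = t + c"
  have m1: "real_of_int m \<le> (t - l) / (2 * pi)" unfolding m_def by (rule of_int_floor_le)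
  have m2: "(t - l) / (2 * pi) < real_of_int m + 1" unfolding m_def by (rule real_of_int_floor_add_one_gt)
  have a1: "2 * pi * real_of_int m \<le> t - l" using m1 by (simp add: pos_le_divide_eq mult.commute)
  have a2: "t - l < 2 * pi * real_of_int m + 2 * pi" using m2 by (simp add: pos_divide_less_eq algebra_simps)
  have win: "Min R \<le> t'" "t' < Min R + 2 * pi" using a1 a2 by (auto simp: t'_def c_def l_def)
  have per: "\<And>s. f (s + c) = f s" unfolding c_def by (rule rtp_periodic)
  have per': "f' t' = f' t" unfolding t'_def c_def by (rule rtp_periodic)
  have ft: "f t' = f t" unfolding t'_def by (rule per)
  have zt: "zD t' = zD t"
  proof -
    have "complex_of_real t' = complex_of_real t + complex_of_real (2 * pi * of_int (- m))"
      by (simp add: t'_def c_def)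
    thus ?thesis using zorder_trig_periodic[of "da B" "db A" k "of_real t" "- m"] by simp
  qed
  have "zD t' = 1 \<and> ((smax f t' \<and> f t' > 0) \<or> (smin f t' \<and> f t' < 0))"
    by (rule C1w[OF win]) (use c nz per' ft in auto)
  moreover have "smax f t' \<longleftrightarrow> smax f t" unfolding t'_def by (rule smax_periodic[where g=f, OF per])
  moreover have "smin f t' \<longleftrightarrow> smin f t" unfolding t'_def by (rule smin_periodic[where g=f, OF per])
  ultimately show ?thesis using zt ft by simp
qed

lemma C2: "\<exists>W l. finite W \<and> W \<subseteq> {l..<l + 2 * pi} \<and> (\<forall>t\<in>W. f' t = 0) \<and> 2 * int k \<le> (\<Sum>t\<in>W. zD t)"
  using W_fin W_win W_crit sumW_ge by blast

lemma has_root: "\<exists>p. f p = 0"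
  using R_ne fR by blast

end



lemma smax_sub: "smax (\<lambda>s. g s - c) t \<longleftrightarrow> smax g t"
  unfolding smax_def by simp
lemma smin_sub: "smin (\<lambda>s. g s - c) t \<longleftrightarrow> smin g t"
  unfolding smin_def by simp

lemma trig_zorder_pos:
  assumes "trig_poly a b k z0 \<noteq> 0" "trig_poly a b k z = 0"
  shows "zorder (trig_poly a b k) z \<ge> 1"
proof -
  have fr: "\<exists>\<^sub>F w in at z. trig_poly a b k w \<noteq> 0"
    using trig_ev_ne[OF assms(1), of z] by (intro eventually_frequently) auto
  have "zorder (trig_poly a b k) z > 0"
    using zorder_pos_iff[of "trig_poly a b k" UNIV z, OF trig_holo _ _ fr] assms(2) by simp
  thus ?thesis by linarith
qed

lemma window_mod_inj:
  assumes "W \<subseteq> {l..<l + 2 * pi}"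
  shows "inj_on (\<lambda>t. t - 2 * pi * real_of_int \<lfloor>t / (2 * pi)\<rfloor>) W"
proof (rule inj_onI)
  fix s t assume st: "s \<in> W" "t \<in> W" and eq: "s - 2 * pi * real_of_int \<lfloor>s / (2 * pi)\<rfloor> = t - 2 * pi * real_of_int \<lfloor>t / (2 * pi)\<rfloor>"
  define n where "n = \<lfloor>s / (2 * pi)\<rfloor> - \<lfloor>t / (2 * pi)\<rfloor>"
  have d: "s - t = 2 * pi * real_of_int n" using eq by (simp add: n_def algebra_simps)
  have "l \<le> s" "s < l + 2 * pi" "l \<le> t" "t < l + 2 * pi" using st assms by auto
  hence "\<bar>s - t\<bar> < 2 * pi" unfolding abs_less_iff by linarith
  hence "\<bar>real_of_int n\<bar> * (2 * pi) < 2 * pi" using d by (simp add: abs_mult mult.commute)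
  hence "\<bar>real_of_int n\<bar> < 1" by simp
  hence "n = 0" by linarith
  thus "s = t" using d by simp
qed

lemma mod_range: "0 \<le> t - 2 * pi * real_of_int \<lfloor>t / (2 * pi)\<rfloor> \<and> t - 2 * pi * real_of_int \<lfloor>t / (2 * pi)\<rfloor> < 2 * pi"
proof -
  have m1: "real_of_int \<lfloor>t / (2 * pi)\<rfloor> \<le> t / (2 * pi)" by (rule of_int_floor_le)
  have m2: "t / (2 * pi) < real_of_int \<lfloor>t / (2 * pi)\<rfloor> + 1" by (rule real_of_int_floor_add_one_gt)
  have "2 * pi * real_of_int \<lfloor>t / (2 * pi)\<rfloor> \<le> 2 * pi * (t / (2 * pi))"
    by (rule mult_left_mono[OF m1]) simp
  hence a1: "2 * pi * real_of_int \<lfloor>t / (2 * pi)\<rfloor> \<le> t" by simp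
  have "2 * pi * (t / (2 * pi)) < 2 * pi * (real_of_int \<lfloor>t / (2 * pi)\<rfloor> + 1)"
    by (rule mult_strict_left_mono[OF m2]) simp
  hence a2: "t < 2 * pi * real_of_int \<lfloor>t / (2 * pi)\<rfloor> + 2 * pi" by (simp add: algebra_simps)
  show ?thesis using a1 a2 by linarith
qed

lemma exp_real_ne:
  assumes "Im z \<noteq> 0"
  shows "exp (\<i> * z) \<noteq> exp (\<i> * complex_of_real s)"
proof
  assume e: "exp (\<i> * z) = exp (\<i> * complex_of_real s)"
  have "norm (exp (\<i> * z)) = exp (- Im z)" by (simp add: norm_exp_eq_Re)
  moreover have "norm (exp (\<i> * complex_of_real s)) = 1" by (simp add: norm_exp_eq_Re)
  ultimately have "exp (- Im z) = 1" using e by simp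
  thus False using assms by simp
qed



lemma hyp_pic:
  assumes h: "hyperbolic_pt a1 b1 a2 b2 k x" and U: "U \<noteq> 0" and k: "k \<ge> 1"
  shows "pic ((\<lambda>j. fst U * a1 j + snd U * a2 j)(0 := fst U * a1 0 + snd U * a2 0 - U \<bullet> x))
             (\<lambda>j. fst U * b1 j + snd U * b2 j) k"
proof -
  define g where "g = (\<lambda>z. complex_of_real (fst U) * trig_poly a1 b1 k z
                     + complex_of_real (snd U) * trig_poly a2 b2 k z
                     - complex_of_real (U \<bullet> x))"
  have "finite (real_roots g) \<and> real_root_count g = 2 * k"
    using h U unfolding hyperbolic_pt_def g_def Let_def by blast
  moreover have "g = trig_poly ((\<lambda>j. fst U * a1 j + snd U * a2 j)(0 := fst U * a1 0 + snd U * a2 0 - U \<bullet> x))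
             (\<lambda>j. fst U * b1 j + snd U * b2 j) k"
  proof
    fix z
    show "g z = trig_poly ((\<lambda>j. fst U * a1 j + snd U * a2 j)(0 := fst U * a1 0 + snd U * a2 0 - U \<bullet> x))
             (\<lambda>j. fst U * b1 j + snd U * b2 j) k z"
      unfolding g_def trig_lin
      using trig_const[of "\<lambda>j. fst U * a1 j + snd U * a2 j" "\<lambda>j. fst U * b1 j + snd U * b2 j" k z "U \<bullet> x"]
      by simp
  qed
  ultimately show ?thesis using k by unfold_locales auto
qed



theorem proposition12:
  fixes a1 b1 a2 b2 :: "nat \<Rightarrow> real" and k :: nat and x y :: "real \<times> real"
  assumes "k \<ge> 1"
    and "has_trig_degree a1 b1 k" and "has_trig_degree a2 b2 k"
    and "hyperbolic_pt a1 b1 a2 b2 k x" and "hyperbolic_pt a1 b1 a2 b2 k y"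
    and "x \<noteq> y"
  shows "\<forall>z::complex. theta a1 b1 a2 b2 k x z - theta a1 b1 a2 b2 k y z = 0 \<longrightarrow> Im z = 0"
proof (intro allI impI)
  fix z :: complex
  assume z: "theta a1 b1 a2 b2 k x z - theta a1 b1 a2 b2 k y z = 0"
  show "Im z = 0"
  proof (rule ccontr)
    assume Imz: "Im z \<noteq> 0"
    define U where "U = x - y"
    have U0: "U \<noteq> 0" using assms(6) by (simp add: U_def)
    define A where "A = (\<lambda>j. fst U * a1 j + snd U * a2 j)"
    define B where "B = (\<lambda>j. fst U * b1 j + snd U * b2 j)"
    define a where "a = U \<bullet> y"
    define b where "b = U \<bullet> x"
    define c where "c = (a + b) / 2"
    define Ax where "Ax = A(0 := A 0 - b)"
    define Ay where "Ay = A(0 := A 0 - a)"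
    define Ac where "Ac = A(0 := A 0 - c)"
    define h where "h = rtp A B k"
    define h' where "h' = rtp (da B) (db A) k"
    define zD where "zD = (\<lambda>t. zorder (trig_poly (da B) (db A) k) (complex_of_real t))"
    have PX: "pic Ax B k"
      using hyp_pic[OF assms(4) U0 assms(1)] by (simp add: Ax_def A_def B_def b_def)
    have PY: "pic Ay B k"
      using hyp_pic[OF assms(5) U0 assms(1)] by (simp add: Ay_def A_def B_def a_def)
    have "b - a = U \<bullet> U" by (simp add: a_def b_def U_def inner_diff_right)
    moreover have "U \<bullet> U > 0" using U0 by (simp add: inner_gt_zero_iff)
    ultimately have ab: "a < b" by linarith
    have ac: "a < c" "c < b" using ab by (auto simp: c_def)
    have hx: "rtp Ax B k = (\<lambda>s. h s - b)" by (rule ext) (simp add: Ax_def h_def rtp_const)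
    have hy: "rtp Ay B k = (\<lambda>s. h s - a)" by (rule ext) (simp add: Ay_def h_def rtp_const)
    have hc: "rtp Ac B k = (\<lambda>s. h s - c)" by (rule ext) (simp add: Ac_def h_def rtp_const)
    have dx: "db Ax = db A" by (simp add: Ax_def db_upd)
    have dy: "db Ay = db A" by (simp add: Ay_def db_upd)
    have Cx: "zD t = 1 \<and> ((smax h t \<and> h t > b) \<or> (smin h t \<and> h t < b))" if "h' t = 0" "h t \<noteq> b" for t
      using pic.C1[OF PX, of t] that unfolding hx dx h'_def zD_def by (simp add: smax_sub smin_sub)
    have Cy: "zD t = 1 \<and> ((smax h t \<and> h t > a) \<or> (smin h t \<and> h t < a))" if "h' t = 0" "h t \<noteq> a" for t
      using pic.C1[OF PY, of t] that unfolding hy dy h'_def zD_def by (simp add: smax_sub smin_sub)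
    have cls: "zD t = 1 \<and> ((smax h t \<and> h t \<ge> b) \<or> (smin h t \<and> h t \<le> a))" if t: "h' t = 0" for t
    proof (cases "h t = a")
      case True
      with Cx[OF t] ab show ?thesis by auto
    next
      case ha: False
      show ?thesis
      proof (cases "h t = b")
        case True
        with Cy[OF t] ab show ?thesis by auto
      next
        case hb: False
        from Cx[OF t hb] Cy[OF t ha] show ?thesis using not_smax_smin[of h t] by auto
      qed
    qed
    obtain W l where W: "finite W" "W \<subseteq> {l..<l + 2 * pi}" "\<forall>t\<in>W. h' t = 0"
        "2 * int k \<le> (\<Sum>t\<in>W. zD t)"
      using pic.C2[OF PY] unfolding dy h'_def zD_def by blast
    have "(\<Sum>t\<in>W. zD t) = (\<Sum>t\<in>W. 1)"
      by (rule sum.cong) (use W(3) cls in auto)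
    hence cW: "2 * k \<le> card W" using W(4) by simp
    define Z where "Z = {t. 0 \<le> t \<and> t < 2 * pi \<and> h' t = 0}"
    have Zf: "finite Z" using pic.crit_fin[OF PX] unfolding dx Z_def h'_def .
    define r where "r = (\<lambda>t::real. t - 2 * pi * real_of_int \<lfloor>t / (2 * pi)\<rfloor>)"
    have rW: "r ` W \<subseteq> Z"
    proof
      fix s assume "s \<in> r ` W"
      then obtain t where t: "t \<in> W" "s = r t" by blast
      have "h' (r t) = h' t"
        unfolding r_def h'_def using rtp_periodic[of "da B" "db A" k t "- \<lfloor>t / (2 * pi)\<rfloor>"] by simp
      thus "s \<in> Z" using t W(3) mod_range[of t] by (simp add: Z_def r_def)
    qed
    have "card W = card (r ` W)"
      using card_image[OF window_mod_inj[OF W(2)]] unfolding r_def by simp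
    also have "\<dots> \<le> card Z" by (rule card_mono[OF Zf rW])
    finally have cZ: "2 * k \<le> card Z" using cW by simp
    hence Zne: "Z \<noteq> {}" using assms(1) by auto
    obtain Y l' where Y: "finite Y" "card Z \<le> card Y" "Y \<subseteq> {l'..<l' + 2 * pi}" "\<forall>s\<in>Y. h s = c"
    proof -
      have "\<exists>Y l. finite Y \<and> card Z \<le> card Y \<and> Y \<subseteq> {l..<l + 2 * pi} \<and> (\<forall>s\<in>Y. h s = c)"
      proof (rule P3[where g=h and g'=h' and Z=Z and \<alpha>=a and \<beta>=b and \<gamma>=c])
        show "(h has_real_derivative h' t) (at t)" for t unfolding h_def h'_def by (rule rtp_deriv)
        show "isCont h' t" for t unfolding h'_def by (rule rtp_isCont)
        show "h' (t + 2 * pi) = h' t" for t unfolding h'_def by (rule rtp_periodic1)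
        show "(smax h t \<and> b \<le> h t) \<or> (smin h t \<and> h t \<le> a)" if "h' t = 0" for t
          using cls[OF that] by blast
      qed (use Zf Zne ac in \<open>auto simp: Z_def\<close>)
      thus ?thesis using that by blast
    qed
    define Fc where "Fc = trig_poly Ac B k"
    have Fc_real: "Fc (complex_of_real s) = complex_of_real (h s - c)" for s
      unfolding Fc_def trig_of_real hc by simp
    obtain p where p: "rtp Ax B k p = 0" using pic.has_root[OF PX] by blast
    have Fcp: "Fc (complex_of_real p) \<noteq> 0"
      using p ac unfolding Fc_real hx by simp
    have Fcz: "Fc z = 0"
    proof -
      have "Fc z = trig_poly A B k z - of_real c"
        unfolding Fc_def Ac_def by (rule trig_const[symmetric])
      also have "\<dots> = of_real (fst U) * trig_poly a1 b1 k z + of_real (snd U) * trig_poly a2 b2 k z - of_real c"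
        unfolding A_def B_def trig_lin ..
      finally have Fe: "Fc z = of_real (fst U) * trig_poly a1 b1 k z + of_real (snd U) * trig_poly a2 b2 k z - of_real c" .
      have cdef: "c = ((fst x - fst y) * fst y + (snd x - snd y) * snd y + (fst x - fst y) * fst x + (snd x - snd y) * snd x) / 2"
        by (simp add: c_def a_def b_def U_def inner_prod_def)
      have "theta a1 b1 a2 b2 k x z - theta a1 b1 a2 b2 k y z = - 2 * Fc z"
        unfolding Fe theta_def cdef U_def
        by (simp add: power2_eq_square field_simps)
      thus ?thesis using z by simp
    qed
    define S where "S = insert z (complex_of_real ` Y)"
    have zY: "z \<notin> complex_of_real ` Y" using Imz by auto
    have injY: "inj_on (\<lambda>w. exp (\<i> * w)) (complex_of_real ` Y)"
      by (rule inj_on_subset[OF exp_inj_window[of l']]) (use Y(3) in auto)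
    have injS: "inj_on (\<lambda>w. exp (\<i> * w)) S"
      unfolding S_def using injY exp_real_ne[OF Imz] by (auto simp: inj_on_insert)
    have "(\<Sum>w\<in>S. zorder Fc w) \<le> 2 * int k"
      unfolding Fc_def by (rule trig_zorder_sum[OF Fcp[unfolded Fc_def] _ injS]) (use Y(1) in \<open>simp add: S_def\<close>)
    moreover have "(\<Sum>w\<in>S. zorder Fc w) \<ge> (\<Sum>w\<in>S. 1)"
    proof (rule sum_mono)
      fix w assume "w \<in> S"
      hence "Fc w = 0" unfolding S_def using Fcz Fc_real Y(4) by auto
      thus "1 \<le> zorder Fc w" unfolding Fc_def by (rule trig_zorder_pos[OF Fcp[unfolded Fc_def]])
    qed
    moreover have "card S = card Y + 1"
      unfolding S_def using zY Y(1) by (simp add: card_image inj_on_def)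
    ultimately show False using cZ Y(2) by simp
  qed
qed


end
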